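(* For a positive integer $n$ let $\Delta^{(odd)}_3([0,n))$ denote the number of odd evil integers in $[0,n)$ divisible by $3$ minus the number of odd odious integers in $[0,n)$ divisible by $3$. Then $$\lim_{n\to\infty}\frac{\ln \Delta^{(odd)}_3([0,n))}{\ln n}=\frac{\ln 3}{\ln 4}.$$
   Context: A nonnegative integer is called evil if its binary expansion contains an even number of 1's, and odious if it contains an odd number of 1's. $[0,n)$ denotes the set of integers $x$ with $0\le x<n$. *)

theory Defs
  imports Complex_Main
begin

fun bin_ones :: "nat \<Rightarrow> nat" where
  "bin_ones n = (if n = 0 then 0 else n mod 2 + bin_ones (n div 2))"

declare bin_ones.simps [simp del]

definition evil :: "nat \<Rightarrow> bool" where
  "evil x \<longleftrightarrow> even (bin_ones x)"

definition odious :: "nat \<Rightarrow> bool" where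
  "odious x \<longleftrightarrow> odd (bin_ones x)"

definition Delta_odd3 :: "nat \<Rightarrow> int" where
  "Delta_odd3 n =
     int (card {x \<in> {0..<n}. odd x \<and> 3 dvd x \<and> evil x})
   - int (card {x \<in> {0..<n}. odd x \<and> 3 dvd x \<and> odious x})"

end

theory Submission
  imports Defs "HOL-Real_Asymp.Real_Asymp"
begin

definition sg :: "nat \<Rightarrow> int" where "sg y = (-1)^bin_ones y"
definition H :: "nat \<Rightarrow> nat \<Rightarrow> int" where
  "H t m = (\<Sum>z<m. if (t+z) mod 3 = 0 then sg z else 0)"

lemma bin_ones_0[simp]: "bin_ones 0 = 0"
  by (subst bin_ones.simps) simp

lemma bin_ones_2: "b < 2 \<Longrightarrow> bin_ones (2*a+b) = bin_ones a + b"
proof (cases "2*a+b = 0")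
  case True
  assume "b < 2" then show ?thesis using True by simp
next
  case False
  assume b: "b < 2"
  have "bin_ones (2*a+b) = (2*a+b) mod 2 + bin_ones ((2*a+b) div 2)"
    using False by (subst bin_ones.simps) simp
  also have "(2*a+b) mod 2 = b" using b by simp
  also have "(2*a+b) div 2 = a" using b by simp
  finally show ?thesis by simp
qed

lemma bin_ones_split: "b < 2^j \<Longrightarrow> bin_ones (a*2^j + b) = bin_ones a + bin_ones b"
proof (induction j arbitrary: b)
  case 0
  then show ?case by simp
next
  case (Suc j)
  have e: "a*2^(Suc j) + b = 2*(a*2^j + b div 2) + b mod 2" by simp
  have bd: "b div 2 < 2^j" using Suc.prems by simp
  have eb: "b = 2*(b div 2) + b mod 2" by simp
  have "bin_ones (a*2^(Suc j) + b) = bin_ones (a*2^j + b div 2) + b mod 2"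
    unfolding e by (rule bin_ones_2) simp
  also have "\<dots> = bin_ones a + (bin_ones (b div 2) + b mod 2)" using Suc.IH[OF bd] by simp
  also have "bin_ones (b div 2) + b mod 2 = bin_ones b"
    using bin_ones_2[of "b mod 2" "b div 2"] eb by simp
  finally show ?case .
qed

lemma sg_split: "z < 4^k \<Longrightarrow> sg (d*4^k + z) = sg d * sg z"
proof -
  assume z: "z < 4^k"
  have "(4::nat)^k = 2^(2*k)" by (simp add: power_mult)
  then show ?thesis using bin_ones_split[of z "2*k" d] z by (simp add: sg_def power_add)
qed

lemma pow4_mod3: "(4::nat)^k mod 3 = 1"
  by (subst power_mod[symmetric]) simp

lemma H_Suc: "H t (Suc m) = H t m + (if (t+m) mod 3 = 0 then sg m else 0)"
  by (simp add: H_def)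

lemma H_add1: "H t (m+1) = H t m + (if (t+m) mod 3 = 0 then sg m else 0)"
  using H_Suc by simp

lemma H_0[simp]: "H t 0 = 0" by (simp add: H_def)

lemma H_shift: "m \<le> 4^k \<Longrightarrow> H t (d*4^k + m) = H t (d*4^k) + sg d * H (t+d) m"
proof (induction m)
  case 0
  then show ?case by simp
next
  case (Suc m)
  have m: "m < 4^k" using Suc.prems by simp
  have "(t + (d*4^k + m)) mod 3 = (t + d + m) mod 3"
    using pow4_mod3[of k] by (metis (no_types) add.assoc mod_add_cong mod_mult_right_eq mult.right_neutral)
  then show ?case using Suc.IH m sg_split[OF m, of d] by (simp add: H_Suc algebra_simps)
qed

lemma H3: "H 3 m = H 0 m" "H 4 m = H 1 m" "H 5 m = H 2 m"
  unfolding H_def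
  by (intro sum.cong refl if_cong; presburger)+

lemma sg_vals: "sg 0 = 1" "sg 1 = -1" "sg 2 = -1" "sg 3 = 1"
proof -
  have b1: "bin_ones 1 = 1" "bin_ones (Suc 0) = 1" using bin_ones_2[of 1 0] by simp_all
  have b2: "bin_ones 2 = 1" using bin_ones_2[of 0 1] b1 by simp
  have b3: "bin_ones 3 = 2" using bin_ones_2[of 1 1] b1 by simp
  show "sg 0 = 1" "sg 1 = -1" "sg 2 = -1" "sg 3 = 1" by (simp_all add: sg_def b1 b2 b3)
qed

lemma sg_Suc0[simp]: "sg (Suc 0) = -1" using sg_vals(2) by simp

lemma H_eq: "a mod 3 = b mod 3 \<Longrightarrow> H a m = H b m"
  unfolding H_def by (intro sum.cong refl if_cong) (metis mod_add_left_eq)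

lemma shift_inst:
  assumes m: "m \<le> 4^k" and tgt: "(t + d) mod 3 = s mod 3"
  shows "H t (d*4^k + m) = H t (d*4^k) + sg d * H s m"
  using H_shift[OF m, of t d] H_eq[OF tgt, of m] by simp

lemma decomp:
  fixes X :: nat assumes X: "X = 4^k" and m: "m \<le> X"
  shows "H 0 (X + m) = H 0 X - H 1 m" "H 1 (X + m) = H 1 X - H 2 m" "H 2 (X + m) = H 2 X - H 0 m"
    "H 0 (2*X + m) = H 0 (2*X) - H 2 m" "H 1 (2*X + m) = H 1 (2*X) - H 0 m"
    "H 2 (2*X + m) = H 2 (2*X) - H 1 m"
    "H 0 (3*X + m) = H 0 (3*X) + H 0 m" "H 1 (3*X + m) = H 1 (3*X) + H 1 m"
    "H 2 (3*X + m) = H 2 (3*X) + H 2 m"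
proof -
  have m': "m \<le> 4^k" using m X by simp
  show "H 0 (X + m) = H 0 X - H 1 m" using shift_inst[OF m', of 0 1 1] X by (simp add: sg_vals)
  show "H 1 (X + m) = H 1 X - H 2 m" using shift_inst[OF m', of 1 1 2] X by (simp add: sg_vals)
  show "H 2 (X + m) = H 2 X - H 0 m" using shift_inst[OF m', of 2 1 0] X by (simp add: sg_vals)
  show "H 0 (2*X + m) = H 0 (2*X) - H 2 m" using shift_inst[OF m', of 0 2 2] X by (simp add: sg_vals)
  show "H 1 (2*X + m) = H 1 (2*X) - H 0 m" using shift_inst[OF m', of 1 2 0] X by (simp add: sg_vals)
  show "H 2 (2*X + m) = H 2 (2*X) - H 1 m" using shift_inst[OF m', of 2 2 1] X by (simp add: sg_vals)
  show "H 0 (3*X + m) = H 0 (3*X) + H 0 m" using shift_inst[OF m', of 0 3 0] X by (simp add: sg_vals)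
  show "H 1 (3*X + m) = H 1 (3*X) + H 1 m" using shift_inst[OF m', of 1 3 1] X by (simp add: sg_vals)
  show "H 2 (3*X + m) = H 2 (3*X) + H 2 m" using shift_inst[OF m', of 2 3 2] X by (simp add: sg_vals)
qed

lemma H_small:
  "H 0 1 = 1" "H 1 1 = 0" "H 2 1 = 0"
  "H 0 2 = 1" "H 1 2 = 0" "H 2 2 = -1"
  "H 0 3 = 1" "H 1 3 = -1" "H 2 3 = -1"
  "H 0 4 = 2" "H 1 4 = -1" "H 2 4 = -1"
  by (simp_all add: H_def lessThan_nat_numeral sg_vals)

lemma H_exact: "H 0 (4^Suc k) = 2*3^k \<and> H 1 (4^Suc k) = -(3^k) \<and> H 2 (4^Suc k) = -(3^k)"
proof (induction k)
  case 0
  then show ?case using H_small(11)[unfolded One_nat_def] by (simp add: H_small)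
next
  case (Suc k)
  define X :: nat where "X = 4^Suc k"
  have e: "4^Suc (Suc k) = 3*X + X" unfolding X_def by simp
  note d = decomp[OF X_def order_refl]
  have e2: "X + X = 2*X" "2*X + X = 3*X" by simp_all
  show ?case unfolding e using d Suc.IH[folded X_def]
    by (simp add: e2)
qed

definition Bd :: "nat \<Rightarrow> nat \<Rightarrow> bool" where
  "Bd k m \<longleftrightarrow> 0 \<le> H 0 m \<and> H 0 m \<le> 2*3^k \<and> -(3^k) \<le> H 1 m \<and> H 1 m \<le> 0
      \<and> -(3^k) \<le> H 2 m \<and> H 2 m \<le> 0"

lemma main: "(\<forall>m \<le> 4^Suc k. Bd k m) \<and> (\<forall>m. 4^k < m \<and> m \<le> 4^Suc k \<longrightarrow> 3 * H 2 m \<le> -(3^k))"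
proof (induction k)
  case 0
  note hs = H_small H_small[unfolded One_nat_def]
  have tab: "Bd 0 0" "Bd 0 1" "Bd 0 2" "Bd 0 3" "Bd 0 4" by (simp_all add: Bd_def hs)
  have tab2: "H 2 2 = -1" "H 2 3 = -1" "H 2 4 = -1" by (simp_all add: hs)
  have c: "m \<le> 4 \<Longrightarrow> m = 0 \<or> m = 1 \<or> m = 2 \<or> m = 3 \<or> m = 4" for m :: nat by auto
  show ?case
  proof (intro conjI allI impI)
    fix m :: nat assume "m \<le> 4^Suc 0"
    then show "Bd 0 m" using c[of m] tab by auto
  next
    fix m :: nat assume "4^0 < m \<and> m \<le> 4^Suc 0"
    then have "m = 2 \<or> m = 3 \<or> m = 4" by auto
    then show "3 * H 2 m \<le> -(3^0)" using tab2 by auto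
  qed
next
  case (Suc k)
  define X :: nat where "X = 4^Suc k"
  define u :: int where "u = 3^k"
  have ex: "H 0 X = 2*u" "H 1 X = -u" "H 2 X = -u" using H_exact[of k] unfolding X_def u_def by auto
  have u0: "u \<ge> 0" unfolding u_def by simp
  note d = decomp[OF X_def]
  have e2: "X + X = 2*X" "2*X + X = 3*X" by simp_all
  have ex2: "H 0 (2*X) = 3*u" "H 1 (2*X) = 0" "H 2 (2*X) = -3*u"
    using d(1-3)[OF order_refl] ex unfolding e2 by simp_all
  have ex3: "H 0 (3*X) = 4*u" "H 1 (3*X) = -2*u" "H 2 (3*X) = -2*u"
    using d(4-6)[OF order_refl] ex ex2 unfolding e2 by simp_all
  have IH: "m' \<le> X \<Longrightarrow> 0 \<le> H 0 m' \<and> H 0 m' \<le> 2*u \<and> -u \<le> H 1 m' \<and> H 1 m' \<le> 0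
      \<and> -u \<le> H 2 m' \<and> H 2 m' \<le> 0" for m'
    using Suc.IH unfolding X_def u_def Bd_def by blast
  have key: "Bd (Suc k) m \<and> (X < m \<longrightarrow> 3 * H 2 m \<le> -(3^Suc k))" if m: "m \<le> 4*X" for m
  proof -
    have pw: "(3::int)^Suc k = 3*u" unfolding u_def by simp
    consider "m \<le> X" | "X < m" "m \<le> 2*X" | "2*X < m" "m \<le> 3*X" | "3*X < m" "m \<le> 4*X"
      using m by linarith
    then show ?thesis
    proof cases
      case 1
      then show ?thesis using IH[OF 1] u0 unfolding Bd_def pw by auto
    next
      case 2
      define m' where "m' = m - X"
      have mm: "m = X + m'" "m' \<le> X" using 2 unfolding m'_def by auto
      show ?thesis using IH[OF mm(2)] u0 d(1-3)[OF mm(2)] ex unfolding Bd_def pw mm(1) by auto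
    next
      case 3
      define m' where "m' = m - 2*X"
      have mm: "m = 2*X + m'" "m' \<le> X" using 3 unfolding m'_def by auto
      show ?thesis using IH[OF mm(2)] u0 d(4-6)[OF mm(2)] ex2 unfolding Bd_def pw mm(1) by auto
    next
      case 4
      define m' where "m' = m - 3*X"
      have mm: "m = 3*X + m'" "m' \<le> X" using 4 unfolding m'_def by auto
      show ?thesis using IH[OF mm(2)] u0 d(7-9)[OF mm(2)] ex3 unfolding Bd_def pw mm(1) by auto
    qed
  qed
  have e4: "4^Suc (Suc k) = 4*X" unfolding X_def by simp
  show ?case unfolding e4 using key X_def by auto
qed

definition ff :: "nat \<Rightarrow> int" where
  "ff x = (if odd x \<and> 3 dvd x then sg x else 0)"

lemma Delta_sum: "Delta_odd3 n = (\<Sum>x<n. ff x)"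
proof -
  have a: "int (card {x \<in> {0..<n}. odd x \<and> 3 dvd x \<and> Q x}) =
        (\<Sum>x<n. if odd x \<and> 3 dvd x \<and> Q x then 1 else 0)" for Q
  proof -
    have "int (card {x \<in> {0..<n}. odd x \<and> 3 dvd x \<and> Q x}) = (\<Sum>x\<in>{x \<in> {0..<n}. odd x \<and> 3 dvd x \<and> Q x}. 1)"
      by simp
    also have "\<dots> = (\<Sum>x\<in>{0..<n}. if odd x \<and> 3 dvd x \<and> Q x then 1 else 0)"
      by (rule sum.inter_filter) simp
    finally show ?thesis by (simp add: lessThan_atLeast0)
  qed
  show ?thesis unfolding Delta_odd3_def a sum_subtractf[symmetric]
    by (rule sum.cong) (auto simp: ff_def sg_def evil_def odious_def)
qed

lemma ff_pairs: "(\<Sum>x<2*m. ff x) = - H 2 m"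
proof (induction m)
  case 0
  then show ?case by simp
next
  case (Suc m)
  have e: "2 * Suc m = Suc (Suc (2*m))" by simp
  have f0: "ff (2*m) = 0" by (simp add: ff_def)
  have sg1: "sg (2*m+1) = - sg m" using bin_ones_2[of 1 m] by (simp add: sg_def)
  have dv: "(3 dvd (2*m+1)) = ((2+m) mod 3 = 0)" by presburger
  have f1: "ff (2*m+1) = - (if (2+m) mod 3 = 0 then sg m else 0)"
    unfolding ff_def sg1 dv by simp
  show ?case unfolding e using Suc.IH f0 f1 H_Suc[of 2 m] by simp
qed

lemma Delta_H: "Delta_odd3 n = - H 2 (n div 2)"
proof -
  have "(\<Sum>x<n. ff x) = (\<Sum>x<2*(n div 2). ff x)"
  proof (cases "even n")
    case True
    then show ?thesis by simp
  next
    case False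
    then have e: "n = Suc (2*(n div 2))" by presburger
    have "ff (2*(n div 2)) = 0" by (simp add: ff_def)
    then show ?thesis by (subst e) simp
  qed
  then show ?thesis using Delta_sum ff_pairs by simp
qed

lemma exists_k: assumes "2 \<le> (m::nat)" shows "\<exists>k. 4^k < m \<and> m \<le> 4^Suc k"
proof -
  have ex: "\<exists>j. m \<le> 4^j"
  proof
    have "m < 2^m" by (rule less_exp)
    also have "(2::nat)^m \<le> 4^m" by (rule power_mono) auto
    finally show "m \<le> 4^m" by simp
  qed
  define j where "j = (LEAST j. m \<le> 4^j)"
  have j1: "m \<le> 4^j" unfolding j_def by (rule LeastI_ex[OF ex])
  have j0: "j \<noteq> 0" proof assume "j = 0" then show False using j1 assms by simp qed
  then obtain k where k: "j = Suc k" by (cases j) auto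
  have "\<not> m \<le> 4^k" unfolding j_def
    by (rule not_less_Least) (simp add: k j_def[symmetric])
  then have "4^k < m \<and> m \<le> 4^Suc k" using j1 k by auto
  then show ?thesis by blast
qed

lemma Delta_bounds:
  assumes n: "4 \<le> n"
  shows "\<exists>k. 3^k \<le> 3 * Delta_odd3 n \<and> Delta_odd3 n \<le> 3^k \<and> 4^k < n \<and> n \<le> 4^(k+2)"
proof -
  obtain k where k: "4^k < n div 2" "n div 2 \<le> 4^Suc k" proof -
    have "2 \<le> n div 2" using n by linarith
    then show ?thesis using exists_k[of "n div 2"] that by blast
  qed
  have B: "Bd k (n div 2)" using main[of k] k by auto
  have L: "3 * H 2 (n div 2) \<le> -(3^k)" using main[of k] k by auto
  have "n \<le> 2 * (n div 2) + 1" by simp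
  also have "\<dots> \<le> 2 * 4^Suc k + 1" using k by simp
  also have "\<dots> \<le> 4^(k+2)" by simp
  finally have n2: "n \<le> 4^(k+2)" .
  have "4^k < n" using k by linarith
  then show ?thesis using B L n2 unfolding Delta_H Bd_def by (intro exI[of _ k]) auto
qed

lemma sq: "(\<lambda>n. ln 3 / ln 4 - 3 * ln 3 / ln (real n)) \<longlonglongrightarrow> ln 3 / ln 4"
  by real_asymp


theorem theorem4:
  shows "(\<lambda>n. ln (real_of_int (Delta_odd3 n)) / ln (real n))
           \<longlonglongrightarrow> ln 3 / ln 4"
proof (rule tendsto_sandwich[OF _ _ sq tendsto_const])
  have *: "ln 3 / ln 4 - 3 * ln 3 / ln (real n) \<le> ln (real_of_int (Delta_odd3 n)) / ln (real n)
     \<and> ln (real_of_int (Delta_odd3 n)) / ln (real n) \<le> ln 3 / ln 4" if n: "4 \<le> n" for n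
  proof -
    obtain k where k: "3^k \<le> 3 * Delta_odd3 n" "Delta_odd3 n \<le> 3^k" "4^k < n" "n \<le> 4^(k+2)"
      using Delta_bounds[OF n] by blast
    define D where "D = real_of_int (Delta_odd3 n)"
    define L where "L = ln (real n)"
    have D1: "(3::real)^k \<le> 3 * D" using k(1) unfolding D_def
      by (metis of_int_le_iff of_int_mult of_int_numeral of_int_power)
    have D2: "D \<le> (3::real)^k" using k(2) unfolding D_def
      by (metis of_int_le_iff of_int_numeral of_int_power)
    have Dpos: "D > 0" using D1 by (smt (verit) zero_less_power)
    have n1: "(4::real)^k < real n" using k(3)
      by (metis of_nat_less_iff of_nat_numeral of_nat_power)
    have n2: "real n \<le> (4::real)^(k+2)" using k(4)
      by (metis of_nat_le_iff of_nat_numeral of_nat_power)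
    have l1: "real k * ln 3 \<le> ln 3 + ln D"
    proof -
      have "ln ((3::real)^k) \<le> ln (3*D)" using D1 Dpos by simp
      then show ?thesis using Dpos by (simp add: ln_realpow ln_mult)
    qed
    have l2: "ln D \<le> real k * ln 3"
    proof -
      have "ln D \<le> ln ((3::real)^k)" using D2 Dpos by simp
      then show ?thesis by (simp add: ln_realpow)
    qed
    have l3: "real k * ln 4 < L"
    proof -
      have "ln ((4::real)^k) < L" unfolding L_def using n1 by simp
      then show ?thesis by (simp add: ln_realpow)
    qed
    have l4: "L \<le> (real k + 2) * ln 4"
    proof -
      have "L \<le> ln ((4::real)^(k+2))" unfolding L_def using n2 n by simp
      moreover have "ln ((4::real)^(k+2)) = real (k+2) * ln 4" by (rule ln_realpow)
      ultimately show ?thesis by (simp add: add.commute)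
    qed
    have ln4: "ln (4::real) > 0" by simp
    have ln3: "ln (3::real) > 0" by simp
    have Lpos: "L > 0" unfolding L_def using n by simp
    define a where "a = ln 3 / ln (4::real)"
    have a3: "ln 3 = a * ln 4" unfolding a_def using ln4 by simp
    have a0: "a > 0" unfolding a_def using ln3 ln4 by simp
    have up: "ln D \<le> a * L"
    proof -
      have "ln D \<le> a * (real k * ln 4)" using l2 a3 by (simp add: algebra_simps)
      also have "\<dots> \<le> a * L" using l3 a0 by simp
      finally show ?thesis .
    qed
    have lo: "a * L - 3 * ln 3 \<le> ln D"
    proof -
      have "a * L \<le> a * ((real k + 2) * ln 4)" using l4 a0 by simp
      also have "\<dots> = real k * ln 3 + 2 * ln 3" using a3 by (simp add: algebra_simps)
      finally show ?thesis using l1 by simp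
    qed
    have "a - 3 * ln 3 / L = (a * L - 3 * ln 3) / L" using Lpos by (simp add: field_simps)
    also have "\<dots> \<le> ln D / L" using lo Lpos by (intro divide_right_mono) auto
    finally have "a - 3 * ln 3 / L \<le> ln D / L" .
    moreover have "ln D / L \<le> a" using up Lpos by (simp add: field_simps)
    ultimately show ?thesis unfolding a_def D_def L_def by simp
  qed
  show "\<forall>\<^sub>F n in sequentially. ln 3 / ln 4 - 3 * ln 3 / ln (real n) \<le> ln (real_of_int (Delta_odd3 n)) / ln (real n)"
    using * by (intro eventually_sequentiallyI[of 4]) blast
  show "\<forall>\<^sub>F n in sequentially. ln (real_of_int (Delta_odd3 n)) / ln (real n) \<le> ln 3 / ln 4"
    using * by (intro eventually_sequentiallyI[of 4]) blast
qed

end
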